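(* Let $L$ be a finite-dimensional pure, nonnilpotent, solvable Lie algebra over $\mathbb{C}$ of breadth $2$ such that $\dim[L,L]=3$ and $\dim\big(L/Z(L)\big)=3$. Then $[L,L]$ is isomorphic to the $3$-dimensional Heisenberg Lie algebra (i.e. it has a basis $\{x,y,z\}$ with $[x,y]=z$ and $[x,z]=[y,z]=0$).
   Context: For $x\in L$, $b(x)=\mathrm{rank}(\mathrm{ad}_x)$ and the breadth of $L$ is $b(L)=\max\{b(x)\mid x\in L\}$. $L$ is pure if it has no abelian ideal as a direct summand; equivalently $Z(L)\subseteq[L,L]$, where $Z(L)$ is the center. *)

theory Defs
  imports Complex_Main
begin

text \<open>The whole type is L.\<close>

definition lie_algebra :: "(complex \<Rightarrow> 'v::ab_group_add \<Rightarrow> 'v) \<Rightarrow> ('v \<Rightarrow> 'v \<Rightarrow> 'v) \<Rightarrow> bool" where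
  "lie_algebra sc br \<longleftrightarrow>
     vector_space sc \<and>
     (\<forall>x y z. br (x + y) z = br x z + br y z) \<and>
     (\<forall>x y z. br x (y + z) = br x y + br x z) \<and>
     (\<forall>c x y. br (sc c x) y = sc c (br x y)) \<and>
     (\<forall>c x y. br x (sc c y) = sc c (br x y)) \<and>
     (\<forall>x. br x x = 0) \<and>
     (\<forall>x y z. br x (br y z) + br y (br z x) + br z (br x y) = 0)"

definition finite_dim_lie :: "(complex \<Rightarrow> 'v::ab_group_add \<Rightarrow> 'v) \<Rightarrow> bool" where
  "finite_dim_lie sc \<longleftrightarrow> (\<exists>B. finite B \<and> module.span sc B = UNIV)"

definition lie_bracket_set ::
  "(complex \<Rightarrow> 'v::ab_group_add \<Rightarrow> 'v) \<Rightarrow> ('v \<Rightarrow> 'v \<Rightarrow> 'v) \<Rightarrow> 'v set \<Rightarrow> 'v set \<Rightarrow> 'v set" where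
  "lie_bracket_set sc br S T = module.span sc {br x y | x y. x \<in> S \<and> y \<in> T}"

definition derived_alg :: "(complex \<Rightarrow> 'v::ab_group_add \<Rightarrow> 'v) \<Rightarrow> ('v \<Rightarrow> 'v \<Rightarrow> 'v) \<Rightarrow> 'v set" where
  "derived_alg sc br = lie_bracket_set sc br UNIV UNIV"

definition lie_center :: "('v::ab_group_add \<Rightarrow> 'v \<Rightarrow> 'v) \<Rightarrow> 'v set" where
  "lie_center br = {z. \<forall>x. br z x = 0}"

fun derived_series :: "(complex \<Rightarrow> 'v::ab_group_add \<Rightarrow> 'v) \<Rightarrow> ('v \<Rightarrow> 'v \<Rightarrow> 'v) \<Rightarrow> nat \<Rightarrow> 'v set" where
  "derived_series sc br 0 = UNIV"
| "derived_series sc br (Suc n) = lie_bracket_set sc br (derived_series sc br n) (derived_series sc br n)"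

fun lower_central_series :: "(complex \<Rightarrow> 'v::ab_group_add \<Rightarrow> 'v) \<Rightarrow> ('v \<Rightarrow> 'v \<Rightarrow> 'v) \<Rightarrow> nat \<Rightarrow> 'v set" where
  "lower_central_series sc br 0 = UNIV"
| "lower_central_series sc br (Suc n) = lie_bracket_set sc br UNIV (lower_central_series sc br n)"

definition solvable_lie :: "(complex \<Rightarrow> 'v::ab_group_add \<Rightarrow> 'v) \<Rightarrow> ('v \<Rightarrow> 'v \<Rightarrow> 'v) \<Rightarrow> bool" where
  "solvable_lie sc br \<longleftrightarrow> (\<exists>n. derived_series sc br n = {0})"

definition nilpotent_lie :: "(complex \<Rightarrow> 'v::ab_group_add \<Rightarrow> 'v) \<Rightarrow> ('v \<Rightarrow> 'v \<Rightarrow> 'v) \<Rightarrow> bool" where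
  "nilpotent_lie sc br \<longleftrightarrow> (\<exists>n. lower_central_series sc br n = {0})"

text \<open>Pure: equivalently, the centre is contained in the derived algebra.\<close>
definition pure_lie :: "(complex \<Rightarrow> 'v::ab_group_add \<Rightarrow> 'v) \<Rightarrow> ('v \<Rightarrow> 'v \<Rightarrow> 'v) \<Rightarrow> bool" where
  "pure_lie sc br \<longleftrightarrow> lie_center br \<subseteq> derived_alg sc br"

definition elem_breadth :: "(complex \<Rightarrow> 'v::ab_group_add \<Rightarrow> 'v) \<Rightarrow> ('v \<Rightarrow> 'v \<Rightarrow> 'v) \<Rightarrow> 'v \<Rightarrow> nat" where
  "elem_breadth sc br x = vector_space.dim sc (range (br x))"

definition lie_breadth :: "(complex \<Rightarrow> 'v::ab_group_add \<Rightarrow> 'v) \<Rightarrow> ('v \<Rightarrow> 'v \<Rightarrow> 'v) \<Rightarrow> nat" where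
  "lie_breadth sc br = Max (range (elem_breadth sc br))"

end

theory Submission
  imports Defs
begin

locale LA = finite_dimensional_vector_space scale Basis
  for scale :: "complex \<Rightarrow> 'v::ab_group_add \<Rightarrow> 'v" (infixr \<open>*s\<close> 75)
  and Basis :: "'v set" +
  fixes br :: "'v \<Rightarrow> 'v \<Rightarrow> 'v"
  assumes addL[simp]: "br (x + y) z = br x z + br y z"
  and addR[simp]: "br x (y + z) = br x y + br x z"
  and scL[simp]: "br (c *s x) y = c *s br x y"
  and scR[simp]: "br x (c *s y) = c *s br x y"
  and alt[simp]: "br x x = 0"
  and jac: "br x (br y z) + br y (br z x) + br z (br x y) = 0"
begin

lemma br0L[simp]: "br 0 y = 0" using addL[of 0 0 y] by simp
lemma br0R[simp]: "br x 0 = 0" using addR[of x 0 0] by simp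

lemma anti: "br y x = - br x y"
proof -
  have "br (x+y) (x+y) = (br x x + br y x) + (br x y + br y y)"
    by (simp only: addL addR)
  then have "br y x + br x y = 0" by (simp only: alt add_0_left add_0_right)
  then show ?thesis by (simp add: eq_neg_iff_add_eq_0)
qed

lemma negL[simp]: "br (- x) y = - br x y"
proof -
  have "br x y + br (-x) y = 0" using addL[of x "-x" y] by simp
  then show ?thesis using neg_eq_iff_add_eq_0[of "br x y" "br (-x) y"] by simp
qed
lemma negR[simp]: "br x (- y) = - br x y"
proof -
  have "br x y + br x (-y) = 0" using addR[of x y "-y"] by simp
  then show ?thesis using neg_eq_iff_add_eq_0[of "br x y" "br x (-y)"] by simp
qed
lemma diffL[simp]: "br (x - y) z = br x z - br y z"
  by (simp only: diff_conv_add_uminus addL negL)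
lemma diffR[simp]: "br x (y - z) = br x y - br x z"
  by (simp only: diff_conv_add_uminus addR negR)

lemma subspace_center: "subspace (lie_center br)"
proof (rule subspaceI)
  show "0 \<in> lie_center br" unfolding lie_center_def by simp
  fix x y c assume x: "x \<in> lie_center br" and y: "y \<in> lie_center br"
  show "x + y \<in> lie_center br" using x y unfolding lie_center_def by simp
  show "c *s x \<in> lie_center br" using x unfolding lie_center_def by simp
qed

lemma span_center[simp]: "span (lie_center br) = lie_center br"
  using subspace_center span_eq_iff by blast

lemma center_neg: "z \<in> lie_center br \<Longrightarrow> - z \<in> lie_center br"
  by (simp add: lie_center_def)
lemma center_scale: "z \<in> lie_center br \<Longrightarrow> c *s z \<in> lie_center br"
  by (simp add: lie_center_def)

lemma centL[simp]: "z \<in> lie_center br \<Longrightarrow> br z x = 0"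
  by (simp add: lie_center_def)
lemma centR[simp]: "z \<in> lie_center br \<Longrightarrow> br x z = 0"
  using anti[of x z] by simp

lemma br_span_left:
  assumes "subspace V" "\<And>s. s \<in> S \<Longrightarrow> br s y \<in> V" "x \<in> span S"
  shows "br x y \<in> V"
proof -
  have "span S \<subseteq> {x. br x y \<in> V}"
    apply (rule span_minimal)
    using assms(1,2) by (auto simp: subspace_def)
  then show ?thesis using assms(3) by blast
qed

lemma br_span_right:
  assumes "subspace V" "\<And>s. s \<in> S \<Longrightarrow> br y s \<in> V" "x \<in> span S"
  shows "br y x \<in> V"
proof -
  have "span S \<subseteq> {x. br y x \<in> V}"
    apply (rule span_minimal)
    using assms(1,2) by (auto simp: subspace_def)
  then show ?thesis using assms(3) by blast
qed

lemma D_def': "derived_alg scale br = span {br x y |x y. True}"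
  by (simp add: derived_alg_def lie_bracket_set_def)

lemma Lspan:
  assumes "UNIV \<subseteq> span (lie_center br \<union> {e1, e2, e3})"
  shows "derived_alg scale br = span {br e1 e2, br e1 e3, br e2 e3}"
proof
  let ?T = "{br e1 e2, br e1 e3, br e2 e3}"
  let ?S = "lie_center br \<union> {e1, e2, e3}"
  have gen: "br s t \<in> span ?T" if "s \<in> {e1,e2,e3}" "t \<in> {e1,e2,e3}" for s t
  proof -
    have b: "br e1 e2 \<in> span ?T" "br e1 e3 \<in> span ?T" "br e2 e3 \<in> span ?T"
      by (auto intro: span_base)
    have "- br e1 e2 \<in> span ?T" "- br e1 e3 \<in> span ?T" "- br e2 e3 \<in> span ?T"
      using b by (auto intro: span_neg)
    with b that show ?thesis
      by (auto simp: span_zero anti[of e1 e2] anti[of e1 e3] anti[of e2 e3])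
  qed
  have "br x y \<in> span ?T" for x y
  proof (rule br_span_left[of _ ?S])
    show "x \<in> span ?S" using assms by blast
    fix s assume s: "s \<in> ?S"
    show "br s y \<in> span ?T"
    proof (cases "s \<in> lie_center br")
      case True then show ?thesis by (simp add: span_zero)
    next
      case False
      with s have s3: "s \<in> {e1,e2,e3}" by blast
      show ?thesis
      proof (rule br_span_right[of _ ?S])
        show "y \<in> span ?S" using assms by blast
        fix t assume t: "t \<in> ?S"
        show "br s t \<in> span ?T"
        proof (cases "t \<in> lie_center br")
          case True then show ?thesis by (simp add: span_zero)
        next
          case False
          with t have "t \<in> {e1,e2,e3}" by blast
          with s3 show ?thesis by (rule gen)
        qed
      qed auto
    qed
  qed auto
  then show "derived_alg scale br \<subseteq> span ?T"
    unfolding D_def' by (intro span_minimal) auto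
  show "span ?T \<subseteq> derived_alg scale br"
    unfolding D_def' by (intro span_mono) auto
qed

lemma L3:
  assumes "UNIV \<subseteq> span (lie_center br \<union> {e1, e2, e3})"
    and "dim (derived_alg scale br) = 3"
  shows "independent {br e1 e2, br e1 e3, br e2 e3} \<and> card {br e1 e2, br e1 e3, br e2 e3} = 3"
proof -
  let ?T = "{br e1 e2, br e1 e3, br e2 e3}"
  have sp: "derived_alg scale br = span ?T" using Lspan[OF assms(1)] .
  have c: "card ?T \<le> 3" by (simp add: card_insert_le_m1)
  have ind: "independent ?T"
    apply (rule card_le_dim_spanning[of _ "derived_alg scale br"])
    using sp c assms(2) by (auto intro: span_base)
  then have "dim (span ?T) = card ?T" by (rule dim_span_eq_card_independent)
  with sp assms(2) ind show ?thesis by simp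
qed

lemma indep3:
  assumes "independent {p, q, r}" "card {p, q, r} = 3"
    and "a *s p + b *s q + c *s r = 0"
  shows "a = 0 \<and> b = 0 \<and> c = 0"
proof -
  have d: "p \<noteq> q" "p \<noteq> r" "q \<noteq> r" using assms(2)
    by (auto simp: card_insert_if split: if_splits)
  define f where "f v = (if v = p then a else if v = q then b else c)" for v
  have "(\<Sum>v\<in>{p,q,r}. f v *s v) = a *s p + b *s q + c *s r"
    using d by (simp add: f_def add.assoc)
  then have "(\<Sum>v\<in>{p,q,r}. f v *s v) = 0" using assms(3) by simp
  with assms(1) have "\<forall>v\<in>{p,q,r}. f v = 0"
    unfolding independent_explicit by blast
  then show ?thesis using d by (simp add: f_def)
qed

lemma lbs_center:
  assumes "S \<subseteq> lie_center br"
  shows "lie_bracket_set scale br UNIV S = {0}"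
proof -
  have "{br x y |x y. x \<in> UNIV \<and> y \<in> S} \<subseteq> {0}" using assms by auto
  then have "lie_bracket_set scale br UNIV S \<subseteq> span {0}"
    unfolding lie_bracket_set_def by (rule span_mono)
  moreover have "span {0} = {0}" by simp
  ultimately show ?thesis using span_zero unfolding lie_bracket_set_def by blast
qed

lemma lcs1: "lower_central_series scale br (Suc 0) = derived_alg scale br"
  by (simp add: derived_alg_def)

lemma main:
  assumes pure: "lie_center br \<subseteq> derived_alg scale br"
    and nonnil: "\<not> nilpotent_lie scale br"
    and solv: "solvable_lie scale br"
    and dD: "dim (derived_alg scale br) = 3"
    and dU: "dim (UNIV :: 'v set) = dim (lie_center br) + 3"
  shows "\<exists>x y z. x \<in> derived_alg scale br \<and> y \<in> derived_alg scale br \<and> z \<in> derived_alg scale br \<and>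
           card {x, y, z} = 3 \<and> \<not> dependent {x, y, z} \<and>
           span {x, y, z} = derived_alg scale br \<and>
           br x y = z \<and> br x z = 0 \<and> br y z = 0"
proof -
  define Z where "Z = lie_center br"
  define D where "D = derived_alg scale br"
  have subZ: "subspace Z" using subspace_center Z_def by simp
  have subD: "subspace D" unfolding D_def D_def' by simp
  obtain BZ where BZ: "finite BZ" "BZ \<subseteq> Z" "independent BZ" "span BZ = Z" "card BZ = dim Z"
    using basis_subspace_exists[OF subZ] by blast
  obtain BD where BD: "BZ \<subseteq> BD" "BD \<subseteq> D" "independent BD" "D \<subseteq> span BD"
    using maximal_independent_subset_extend[of BZ D] BZ(2,3) pure Z_def D_def by blast
  have cBD: "card BD = 3" using basis_card_eq_dim[OF BD(2,4,3)] dD D_def by simp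
  obtain B where B0: "BD \<subseteq> B" "B \<subseteq> UNIV" "independent B" "UNIV \<subseteq> span B"
    by (rule maximal_independent_subset_extend[OF subset_UNIV BD(3)])
  note B = B0(1,3,4)
  have cB: "card B = dim Z + 3" using basis_card_eq_dim[of B UNIV] B dU Z_def by simp
  have fB: "finite B" "finite BD" using B(2) BD(3) finiteI_independent by auto
  define E where "E = B - BZ"
  define F where "F = BD - BZ"
  have fE: "finite E" "finite F" using fB E_def F_def by auto
  have cE: "card E = 3" unfolding E_def using card_Diff_subset[of BZ B] BZ B BD cB by auto
  have cF: "card F + card BZ = 3" unfolding F_def using card_Diff_subset[of BZ BD] BZ BD cBD
    by (metis card_mono fB(2) le_add_diff_inverse2)
  have FE: "F \<subseteq> E" using B(1) unfolding E_def F_def by blast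
  have spanE: "UNIV \<subseteq> span (Z \<union> E)"
  proof -
    have "B \<subseteq> Z \<union> E" using BZ(2) E_def by blast
    then show ?thesis using B(3) span_mono by blast
  qed
  have spanF: "D \<subseteq> span (Z \<union> F)"
  proof -
    have "BD \<subseteq> Z \<union> F" using BZ(2) F_def by blast
    then show ?thesis using BD(4) span_mono by blast
  qed
  have FD: "F \<subseteq> D" using BD(2) F_def by blast
  have inD: "br x y \<in> D" for x y unfolding D_def D_def' by (rule span_base) auto
  have nilZ: "\<not> (lower_central_series scale br n \<subseteq> Z)" for n
  proof
    assume "lower_central_series scale br n \<subseteq> Z"
    then have "lower_central_series scale br (Suc n) = {0}" using lbs_center Z_def by simp
    then show False using nonnil unfolding nilpotent_lie_def by blast
  qed
  have "card F \<le> 3" using cF by arith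
  then consider "card F = 0" | "card F = 1" | "card F = 2" | "card F = 3" by arith
  then show ?thesis
  proof cases
    case 1
    then have "F = {}" using fE by simp
    then have "D \<subseteq> Z" using spanF Z_def by simp
    then show ?thesis using nilZ[of 1] lcs1 D_def by simp
  next
    case 4
    have "F = E" using card_subset_eq[OF fE(1) FE] cE 4 by simp
    then have "B \<subseteq> BD" unfolding E_def F_def using BD(1) B(1) by blast
    moreover have "span BD \<subseteq> D" using span_minimal[OF BD(2) subD] .
    ultimately have DU: "D = UNIV" using B(3) span_mono by blast
    have ds: "derived_series scale br n = UNIV" for n
    proof (induction n)
      case 0 then show ?case by simp
    next
      case (Suc n) then show ?case using DU by (simp add: D_def derived_alg_def)
    qed
    obtain n where "derived_series scale br n = {0}" using solv solvable_lie_def by blast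
    then have "(UNIV :: 'v set) = {0}" using ds by simp
    then have "dim (UNIV::'v set) = 0" using dim_eq_0[of "UNIV::'v set"] by blast
    with dU show ?thesis by simp
  next
    case 2
    obtain u where Fu: "F = {u}" using 2 by (rule card_1_singletonE)
    have "card (E - F) = 2" using card_Diff_subset[OF fE(2) FE] cE 2 by simp
    then obtain a b where ab: "E - F = {a, b}" unfolding card_2_iff by blast
    have Eu: "E = {u, a, b}" using FE Fu ab by blast
    have U: "UNIV \<subseteq> span (lie_center br \<union> {u, a, b})" using spanE Eu Z_def by simp
    have Du: "D \<subseteq> span (insert u Z)" using spanF Fu by simp
    have dec: "\<exists>z c. z \<in> Z \<and> y = z + c *s u" if "y \<in> D" for y
    proof -
      from that Du have "y \<in> span (insert u Z)" by blast
      then obtain k where "y - k *s u \<in> span Z" using span_breakdown_eq by blast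
      then have "y - k *s u \<in> Z" using span_center Z_def by simp
      then show ?thesis by (intro exI[of _ "y - k *s u"] exI[of _ k]) simp
    qed
    obtain z0 g where z0: "z0 \<in> Z" "br a b = z0 + g *s u" using dec[OF inD] by blast
    obtain z2 be where z2: "z2 \<in> Z" "br b u = z2 + be *s u" using dec[OF inD] by blast
    obtain z1 al where z1: "z1 \<in> Z" "br u a = z1 + al *s u" using dec[OF inD] by blast
    have J: "br u (br a b) + br a (br b u) + br b (br u a) = 0" by (rule jac)
    have e1: "br u (br a b) = 0" using z0 Z_def by simp
    have e2: "br a (br b u) = (- be) *s br u a" using z2 Z_def anti[of u a] by simp
    have e3: "br b (br u a) = (- al) *s br u b" using z1 Z_def anti[of u b] by simp
    have "(- be) *s br u a + (- al) *s br u b + 0 *s br a b = 0" using J e1 e2 e3 by simp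
    with L3[OF U dD] have "be = 0 \<and> al = 0" using indep3 by fastforce
    then have c1: "br u a \<in> Z" "br b u \<in> Z" using z1 z2 by simp_all
    have bxu: "br x u \<in> Z" for x
    proof (rule br_span_left[of Z "lie_center br \<union> {u, a, b}"])
      show "subspace Z" by (rule subZ)
      show "x \<in> span (lie_center br \<union> {u, a, b})" using U by blast
      fix s assume "s \<in> lie_center br \<union> {u, a, b}"
      then show "br s u \<in> Z"
      proof (elim UnE insertE)
        assume "s = a" then show ?thesis using c1 anti[of a u] center_neg Z_def by simp
      qed (use c1 subZ Z_def in \<open>auto simp: subspace_def\<close>)
    qed
    have "lower_central_series scale br 2 \<subseteq> Z"
    proof -
      have "br x y \<in> Z" if yD: "y \<in> D" for x y
      proof -
        obtain z c where "z \<in> Z" "y = z + c *s u" using dec[OF yD] by blast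
        then show ?thesis using bxu[of x] center_scale Z_def by simp
      qed
      then have sub: "{br x y |x y. x \<in> UNIV \<and> y \<in> lower_central_series scale br 1} \<subseteq> Z"
        using lcs1 D_def by auto
      have eq: "lower_central_series scale br 2
          = lie_bracket_set scale br UNIV (lower_central_series scale br 1)"
        by (simp only: numeral_2_eq_2 One_nat_def lower_central_series.simps(2))
      show ?thesis
        unfolding eq lie_bracket_set_def using sub by (rule span_minimal[OF _ subZ])
    qed
    then show ?thesis using nilZ by blast
  next
    case 3
    obtain u v where Fuv: "F = {u, v}" "u \<noteq> v" using 3 unfolding card_2_iff by blast
    have "card (E - F) = 1" using card_Diff_subset[OF fE(2) FE] cE 3 by simp
    then obtain a where ab: "E - F = {a}" by (rule card_1_singletonE)
    have Eu: "E = {u, v, a}" using FE Fuv ab by blast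
    have U: "UNIV \<subseteq> span (lie_center br \<union> {u, v, a})" using spanE Eu Z_def by simp
    have Du: "D \<subseteq> span (insert u (insert v Z))" using spanF Fuv by simp
    have dec: "\<exists>z c d. z \<in> Z \<and> y = z + c *s u + d *s v" if "y \<in> D" for y
    proof -
      from that Du have "y \<in> span (insert u (insert v Z))" by blast
      then obtain k where "y - k *s u \<in> span (insert v Z)" using span_breakdown_eq by blast
      then obtain m where "y - k *s u - m *s v \<in> span Z" using span_breakdown_eq by blast
      then have "y - k *s u - m *s v \<in> Z" using span_center Z_def by simp
      then show ?thesis
        by (intro exI[of _ "y - k *s u - m *s v"] exI[of _ k] exI[of _ m]) simp
    qed
    obtain z0 be ga where z0: "z0 \<in> Z" "br u v = z0 + be *s u + ga *s v" using dec[OF inD] by blast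
    obtain z1 c1 d1 where z1: "z1 \<in> Z" "br v a = z1 + c1 *s u + d1 *s v" using dec[OF inD] by blast
    obtain z2 c2 d2 where z2: "z2 \<in> Z" "br a u = z2 + c2 *s u + d2 *s v" using dec[OF inD] by blast
    have J: "br a (br u v) + br u (br v a) + br v (br a u) = 0" by (rule jac)
    have e1: "br a (br u v) = (- be) *s br u a + (- ga) *s br v a"
      using z0 Z_def anti[of u a] anti[of v a] by simp
    have e2: "br u (br v a) = d1 *s br u v" using z1 Z_def by simp
    have e3: "br v (br a u) = (- c2) *s br u v" using z2 Z_def anti[of u v] by simp
    have "(d1 - c2) *s br u v + (- be) *s br u a + (- ga) *s br v a = 0"
      using J e1 e2 e3 by (simp add: algebra_simps)
    with L3[OF U dD] have "be = 0 \<and> ga = 0" using indep3 by fastforce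
    then have wZ: "br u v \<in> lie_center br" using z0 Z_def by simp
    have wnz: "br u v \<noteq> 0"
    proof
      assume "br u v = 0"
      then have "1 *s br u v + 0 *s br u a + 0 *s br v a = 0" by simp
      with L3[OF U dD] show False using indep3 by fastforce
    qed
    have uD: "u \<in> D" "v \<in> D" using FD Fuv by auto
    have d1: "br u v \<noteq> u"
    proof
      assume h: "br u v = u"
      have "br (br u v) v = 0" using wZ by simp
      then show False using h wnz by simp
    qed
    have d2: "br u v \<noteq> v"
    proof
      assume h: "br u v = v"
      have "br u (br u v) = 0" using wZ by simp
      then show False using h wnz by simp
    qed
    have card3: "card {u, v, br u v} = 3" using Fuv(2) d1 d2 by simp
    have ind: "independent {u, v, br u v}"
      unfolding independent_explicit
    proof (intro conjI allI impI ballI)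
      show "finite {u, v, br u v}" by simp
      fix c assume S: "(\<Sum>x\<in>{u, v, br u v}. c x *s x) = 0"
      have S': "c u *s u + c v *s v + c (br u v) *s br u v = 0"
        using S Fuv(2) d1 d2 by (simp add: add.assoc)
      have "br u (c u *s u + c v *s v + c (br u v) *s br u v) = 0" using S' by simp
      then have cv: "c v = 0" using wZ wnz by simp
      have "br v (c u *s u + c v *s v + c (br u v) *s br u v) = 0" using S' by simp
      then have cu: "c u = 0" using wZ wnz anti[of v u] by simp
      have cw: "c (br u v) = 0" using S' cu cv wnz by simp
      fix x assume "x \<in> {u, v, br u v}"
      then show "c x = 0" using cu cv cw by auto
    qed
    have sp: "span {u, v, br u v} = D"
    proof
      show "span {u, v, br u v} \<subseteq> D" using span_minimal[OF _ subD] uD inD by auto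
      show "D \<subseteq> span {u, v, br u v}"
        by (rule card_ge_dim_independent) (use uD inD ind card3 dD D_def in auto)
    qed
    show ?thesis
      apply (rule exI[of _ u], rule exI[of _ v], rule exI[of _ "br u v"])
      using uD inD card3 ind sp wZ D_def by simp
  qed
qed

end

theorem lemma3p1:
  fixes sc :: "complex \<Rightarrow> 'v::ab_group_add \<Rightarrow> 'v"
    and br :: "'v \<Rightarrow> 'v \<Rightarrow> 'v"
  assumes "lie_algebra sc br"
    and "finite_dim_lie sc"
    and "pure_lie sc br"
    and "\<not> nilpotent_lie sc br"
    and "solvable_lie sc br"
    and "lie_breadth sc br = 2"
    and "vector_space.dim sc (derived_alg sc br) = 3"
    and "vector_space.dim sc (UNIV :: 'v set) = vector_space.dim sc (lie_center br) + 3"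
  shows "\<exists>x y z. x \<in> derived_alg sc br \<and> y \<in> derived_alg sc br \<and> z \<in> derived_alg sc br \<and>
           card {x, y, z} = 3 \<and> \<not> module.dependent sc {x, y, z} \<and>
           module.span sc {x, y, z} = derived_alg sc br \<and>
           br x y = z \<and> br x z = 0 \<and> br y z = 0"
proof -
  have vs: "vector_space sc" using assms(1) unfolding lie_algebra_def by blast
  obtain B0 where B0: "finite B0" "module.span sc B0 = UNIV"
    using assms(2) unfolding finite_dim_lie_def by blast
  obtain B where B: "B \<subseteq> B0" "module.independent sc B" "B0 \<subseteq> module.span sc B"
    using vector_space.maximal_independent_subset[OF vs, of B0] by blast
  have fB: "finite B" using B(1) B0(1) finite_subset by blast
  interpret vs: vector_space sc by (rule vs)
  have "module.span sc B0 \<subseteq> module.span sc B"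
    using vs.span_minimal[OF B(3) vs.subspace_span] .
  then have spB: "module.span sc B = UNIV" using B0(2) by blast
  interpret LA sc B br
    using assms(1) vs fB B(2) spB
    unfolding LA_def LA_axioms_def finite_dimensional_vector_space_def
      finite_dimensional_vector_space_axioms_def lie_algebra_def
    by blast
  show ?thesis
    using main assms(3,4,5,7,8) unfolding pure_lie_def by blast
qed

end
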